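(* $\mathrm{GL}_4(\mathbb{F}_3)$ contains exactly one conjugacy class of subgroups isomorphic to $A_5\times C_2$. *)

theory Defs
  imports "HOL-Analysis.Analysis" "HOL-Algebra.Sym_Groups" "HOL-Algebra.Elementary_Groups"
begin

text \<open>GL_4(F_3): invertible 4x4 matrices over the field F_3, modelled by the
  numeral type 3 (arithmetic mod 3), under matrix multiplication.\<close>
definition GL4F3 :: "(3^4^4) monoid" where
  "GL4F3 = \<lparr>carrier = {A :: 3^4^4. invertible A}, mult = (**), one = mat 1\<rparr>"

definition A5xC2 :: "((nat \<Rightarrow> nat) \<times> int) monoid" where
  "A5xC2 = alt_group 5 \<times>\<times> integer_mod_group 2"

definition subgroups_iso :: "('a, 'm) monoid_scheme \<Rightarrow> ('b, 'n) monoid_scheme \<Rightarrow> 'a set set" where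
  "subgroups_iso G X = {H. subgroup H G \<and> G\<lparr>carrier := H\<rparr> \<cong> X}"

definition conjugate_subgroups :: "('a, 'm) monoid_scheme \<Rightarrow> 'a set \<Rightarrow> 'a set \<Rightarrow> bool" where
  "conjugate_subgroups G H K \<longleftrightarrow> (\<exists>g\<in>carrier G. K = g <#\<^bsub>G\<^esub> H #>\<^bsub>G\<^esub> inv\<^bsub>G\<^esub> g)"

end

theory Submission
  imports Defs
begin

lemma funpow_mod5:
  assumes "(f^^5) t = t"
  shows "(f^^n) t = (f^^(n mod 5)) t"
proof (induction n rule: less_induct)
  case (less n)
  show ?case
  proof (cases "n < 5")
    case True then show ?thesis by simp
  next
    case False
    then have "(f^^n) t = (f^^((n-5)+5)) t" by simp
    also have "\<dots> = (f^^(n-5)) ((f^^5) t)" by (simp only: funpow_add o_apply)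
    also have "\<dots> = (f^^(n-5)) t" using assms by simp
    also have "\<dots> = (f^^((n-5) mod 5)) t" using less.IH[of "n-5"] False by linarith
    also have "(n-5) mod 5 = n mod 5" using False by (simp add: mod_if)
    finally show ?thesis .
  qed
qed

lemma funpow_fix_mult:
  assumes "(f^^k) t = t" shows "(f^^(k*m)) t = t"
proof (induction m)
  case 0 then show ?case by simp
next
  case (Suc m)
  have "k * Suc m = k + k * m" by simp
  then have "(f^^(k * Suc m)) t = (f^^k) ((f^^(k*m)) t)" by (simp only: funpow_add o_apply)
  then show ?case using Suc assms by simp
qed

lemma fix_from_k:
  assumes "(f^^5) t = t" "(f^^k) t = t" "0 < k" "k < 5"
  shows "f t = t"
proof -
  obtain m where m: "(k * m) mod 5 = 1"
  proof -
    have "k = 1 \<or> k = 2 \<or> k = 3 \<or> k = 4" using assms by auto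
    then show ?thesis
    proof (elim disjE)
      assume "k = 1" then show ?thesis using that[of 1] by simp
    next
      assume "k = 2" then show ?thesis using that[of 3] by simp
    next
      assume "k = 3" then show ?thesis using that[of 2] by simp
    next
      assume "k = 4" then show ?thesis using that[of 4] by simp
    qed
  qed
  have "t = (f^^(k*m)) t" using funpow_fix_mult[OF assms(2)] by simp
  also have "\<dots> = (f^^((k*m) mod 5)) t" using funpow_mod5[OF assms(1)] by blast
  also have "\<dots> = f t" using m by simp
  finally show ?thesis by simp
qed

lemma free5:
  assumes "finite T" "f ` T \<subseteq> T" "\<forall>t\<in>T. (f^^5) t = t \<and> f t \<noteq> t"
  shows "5 dvd card T"
  using assms
proof (induction "card T" arbitrary: T rule: less_induct)
  case less
  show ?case
  proof (cases "T = {}")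
    case True then show ?thesis by simp
  next
    case False
    then obtain t where t: "t \<in> T" by blast
    have t5: "(f^^5) t = t" and tf: "f t \<noteq> t" using less.prems t by auto
    define Orb where "Orb = (\<lambda>i. (f^^i) t) ` {0..<5}"
    have inT: "(f^^i) t \<in> T" for i
      by (induction i) (use t less.prems(2) in auto)
    have OT: "Orb \<subseteq> T" using inT Orb_def by auto
    have inj: "inj_on (\<lambda>i. (f^^i) t) {0..<5}"
    proof (rule inj_onI)
      fix i j assume i: "i \<in> {0..<5}" and j: "j \<in> {0..<5}" and eq: "(f^^i) t = (f^^j) t"
      show "i = j"
      proof (rule ccontr)
        assume "i \<noteq> j"
        then consider "i < j" | "j < i" by linarith
        then show False
        proof cases
          case 1
          have "(f^^(5 - j + i)) t = (f^^(5-j)) ((f^^i) t)" by (simp only: funpow_add o_apply)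
          also have "\<dots> = (f^^(5-j)) ((f^^j) t)" using eq by simp
          also have "\<dots> = (f^^(5 - j + j)) t" by (simp only: funpow_add o_apply)
          also have "\<dots> = t" using j t5 by simp
          finally have "(f^^(5 - j + i)) t = t" .
          then have "f t = t" using fix_from_k[OF t5] 1 j by auto
          then show False using tf by simp
        next
          case 2
          have "(f^^(5 - i + j)) t = (f^^(5-i)) ((f^^j) t)" by (simp only: funpow_add o_apply)
          also have "\<dots> = (f^^(5-i)) ((f^^i) t)" using eq by simp
          also have "\<dots> = (f^^(5 - i + i)) t" by (simp only: funpow_add o_apply)
          also have "\<dots> = t" using i t5 by simp
          finally have "(f^^(5 - i + j)) t = t" .
          then have "f t = t" using fix_from_k[OF t5] 2 i by auto
          then show False using tf by simp
        qed
      qed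
    qed
    have cO: "card Orb = 5" unfolding Orb_def using card_image[OF inj] by simp
    have closed: "f ` (T - Orb) \<subseteq> T - Orb"
    proof
      fix y assume "y \<in> f ` (T - Orb)"
      then obtain u where u: "u \<in> T" "u \<notin> Orb" "y = f u" by auto
      have "y \<in> T" using u less.prems(2) by auto
      moreover have "y \<notin> Orb"
      proof
        assume "y \<in> Orb"
        then obtain i where i: "i < 5" "f u = (f^^i) t" using u Orb_def by auto
        have "u = (f^^5) u" using less.prems(3) u by auto
        also have "\<dots> = (f^^(4 + 1)) u" by simp
        also have "\<dots> = (f^^4) ((f^^1) u)" by (simp only: funpow_add o_apply)
        also have "\<dots> = (f^^4) (f u)" by simp
        also have "\<dots> = (f^^(4+i)) t" using i by (simp only: funpow_add o_apply)
        also have "\<dots> = (f^^((4+i) mod 5)) t" using funpow_mod5[OF t5] by blast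
        finally have "u \<in> Orb" unfolding Orb_def by auto
        then show False using u by simp
      qed
      ultimately show "y \<in> T - Orb" by simp
    qed
    have "card (T - Orb) < card T"
      using OT cO less.prems(1) card_mono[OF less.prems(1) OT] by (simp add: card_Diff_subset finite_subset)
    then have "5 dvd card (T - Orb)"
      using less.hyps[of "T - Orb"] less.prems closed by auto
    moreover have "card T = card (T - Orb) + 5"
      using OT cO less.prems(1) card_Diff_subset[of Orb T] finite_subset[OF OT] card_mono[OF _ OT] by auto
    ultimately show ?thesis by simp
  qed
qed

lemma three_cases: "(a::3) = 0 \<or> a = 1 \<or> a = 2"
proof -
  have "Rep_bit1 a \<in> {0..<3}" using Rep_bit1[of a] by simp
  then have "Rep_bit1 a = 0 \<or> Rep_bit1 a = 1 \<or> Rep_bit1 a = 2" by auto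
  moreover have "Rep_bit1 (2::3) = 2" by (simp add: bit1.Rep_numeral)
  ultimately show ?thesis using bit1.Rep_0 bit1.Rep_1 bit1.Rep_bit1_inject by metis
qed
lemma triple3: "(a::3) + a + a = 0" using three_cases[of a] by auto
lemma tripleV: "(w::3^4) + w + w = 0" by (simp add: vec_eq_iff triple3[simplified])
lemma negV: "- (w::3^4) = w + w"
  using tripleV[of w] by (metis add_eq_0_iff2 add.assoc)
lemma doubleV0: "(w::3^4) + w = 0 \<Longrightarrow> w = 0"
  using tripleV[of w] by simp
lemma cardV: "CARD(3^4) = 81" by (simp add: CARD_vec)

lemma funpow_1: "(f::'a \<Rightarrow> 'a)^^1 = f" by (simp add: fun_eq_iff)

lemma card81_UNIV: "card (S::(3^4) set) = 81 \<Longrightarrow> S = UNIV"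
  by (rule card_subset_eq) (simp_all add: cardV)

definition additive :: "(3^4 \<Rightarrow> 3^4) \<Rightarrow> bool" where
  "additive f \<longleftrightarrow> (\<forall>a b. f (a + b) = f a + f b)"
definition addsub :: "(3^4) set \<Rightarrow> bool" where
  "addsub S \<longleftrightarrow> 0 \<in> S \<and> (\<forall>a\<in>S. \<forall>b\<in>S. a + b \<in> S)"

lemma additive_0: "additive f \<Longrightarrow> f 0 = 0"
  unfolding additive_def by (metis add_cancel_right_right add_0)
lemma additive_neg: "additive f \<Longrightarrow> f (- a) = - f a"
  unfolding additive_def by (metis negV)
lemma additive_diff: "additive f \<Longrightarrow> f (a - b) = f a - f b"
  using additive_neg[of f b] unfolding additive_def by (metis diff_conv_add_uminus)
lemma additive_pow: "additive f \<Longrightarrow> additive (f^^n)"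
  by (induction n) (auto simp: additive_def)
lemma addsub_neg: "addsub S \<Longrightarrow> a \<in> S \<Longrightarrow> - a \<in> S"
  unfolding addsub_def negV by blast

definition AG :: "(3^4) monoid" where
  "AG = \<lparr>carrier = UNIV, mult = (+), one = 0\<rparr>"

lemma AG_group: "group AG"
  by (rule groupI) (auto simp: AG_def add.assoc intro: exI[of _ "- _"])

lemma AG_inv: "inv\<^bsub>AG\<^esub> a = - a"
  using group.inv_equality[OF AG_group, of "- a" a] by (simp add: AG_def)

lemma addsub_dvd: assumes "addsub S" shows "card S dvd 81"
proof -
  have "subgroup S AG"
  proof (rule group.subgroupI[OF AG_group])
    show "S \<subseteq> carrier AG" by (simp add: AG_def)
    show "S \<noteq> {}" using assms by (auto simp: addsub_def)
    show "inv\<^bsub>AG\<^esub> a \<in> S" if "a \<in> S" for a using that assms by (simp add: AG_inv addsub_neg)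
    show "a \<otimes>\<^bsub>AG\<^esub> b \<in> S" if "a \<in> S" "b \<in> S" for a b
      using that assms by (simp add: AG_def addsub_def)
  qed
  then have "card (rcosets\<^bsub>AG\<^esub> S) * card S = order AG"
    using group.lagrange[OF AG_group] by blast
  moreover have "order AG = 81" by (simp add: order_def AG_def cardV)
  ultimately show ?thesis by (metis dvd_triv_right)
qed

lemma card_1_or_81:
  assumes S: "addsub S" and fS: "f ` S \<subseteq> S" and f: "additive f"
    and f5: "\<And>w. (f^^5) w = w" and fix0: "\<And>w. w \<in> S \<Longrightarrow> f w = w \<Longrightarrow> w = 0"
  shows "card S = 1 \<or> card S = 81"
proof -
  let ?T = "S - {0}"
  have "f ` ?T \<subseteq> ?T"
  proof
    fix y assume "y \<in> f ` ?T"
    then obtain w where w: "w \<in> S" "w \<noteq> 0" "y = f w" by auto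
    have "y \<noteq> 0"
    proof
      assume "y = 0"
      have "w = (f^^5) w" using f5 by simp
      also have "\<dots> = (f^^(4+1)) w" by simp
      also have "\<dots> = (f^^4) (f w)" by (simp only: funpow_add o_apply funpow_1)
      also have "\<dots> = 0" using \<open>y = 0\<close> w additive_0[OF additive_pow[OF f]] by simp
      finally show False using w by simp
    qed
    then show "y \<in> ?T" using w fS by auto
  qed
  moreover have "\<forall>t\<in>?T. (f^^5) t = t \<and> f t \<noteq> t" using f5 fix0 by auto
  ultimately have "5 dvd card ?T" using free5[of ?T f] by auto
  moreover have "card ?T = card S - 1" using S by (simp add: addsub_def)
  moreover have "card S \<ge> 1" using S by (auto simp: addsub_def Suc_le_eq card_gt_0_iff)
  moreover obtain i where "i \<le> 4" "card S = 3^i"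
    using addsub_dvd[OF S] divides_primepow_nat[of 3 "card S" 4] by auto
  moreover have "i = 0 \<or> i = 1 \<or> i = 2 \<or> i = 3 \<or> i = 4" using \<open>i \<le> 4\<close> by auto
  ultimately show ?thesis by auto
qed

lemma phi5_zero:
  assumes f: "additive f" and f5: "\<And>w. (f^^5) w = w" and nf: "f w0 \<noteq> w0"
  shows "w + f w + (f^^2) w + (f^^3) w + (f^^4) w = 0"
proof -
  define \<Phi> where "\<Phi> w = w + f w + (f^^2) w + (f^^3) w + (f^^4) w" for w
  have \<Phi>add: "additive \<Phi>"
    using additive_pow[OF f, of 2] additive_pow[OF f, of 3] additive_pow[OF f, of 4] f
    unfolding additive_def \<Phi>_def by (simp add: algebra_simps)
  have \<Phi>f: "\<Phi> (f w) = \<Phi> w" for w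
  proof -
    have fS: "(f^^n) (f w) = (f^^(Suc n)) w" for n by (simp add: funpow_swap1)
    have "(f^^2) (f w) = (f^^3) w" "(f^^3) (f w) = (f^^4) w" "(f^^4) (f w) = (f^^5) w"
      using fS[of 2] fS[of 3] fS[of 4] by simp_all
    moreover have "f (f w) = (f^^2) w" by (simp add: numeral_2_eq_2)
    ultimately show ?thesis using f5[of w] unfolding \<Phi>_def by (simp add: algebra_simps)
  qed
  let ?X = "{w. \<Phi> w = 0}"
  have X: "addsub ?X" using \<Phi>add additive_0[OF \<Phi>add] by (auto simp: addsub_def additive_def)
  have fX: "f ` ?X \<subseteq> ?X" using \<Phi>f by auto
  have fix0: "w = 0" if "w \<in> ?X" "f w = w" for w
  proof -
    have fw: "(f^^n) w = w" for n by (induction n) (use that in auto)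
    have "\<Phi> w = (w + w + w) + w + w" unfolding \<Phi>_def using fw[of 2] fw[of 3] fw[of 4] that(2) by (simp only:)
    then have "\<Phi> w = w + w" by (simp only: tripleV add_0_left)
    then have "w + w = 0" using that(1) by simp
    then show "w = 0" by (rule doubleV0)
  qed
  have "card ?X = 1 \<or> card ?X = 81" using card_1_or_81[OF X fX f f5 fix0] by blast
  moreover have "w0 - f w0 \<in> ?X" using \<Phi>f[of w0] additive_diff[OF \<Phi>add] by simp
  moreover have "0 \<in> ?X" using X by (simp add: addsub_def)
  moreover have "w0 - f w0 \<noteq> 0" using nf by simp
  ultimately have "card ?X = 81"
    by (metis (no_types, lifting) card_1_singletonE singletonD)
  then have "?X = UNIV"
    by (metis cardV card_subset_eq finite top_greatest)
  then show ?thesis unfolding \<Phi>_def by blast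
qed

lemma four_cases: "(i::4) = 0 \<or> i = 1 \<or> i = 2 \<or> i = 3"
proof -
  have "Rep_bit0 i \<in> {0..<4}" using Rep_bit0[of i] by simp
  then have "Rep_bit0 i = 0 \<or> Rep_bit0 i = 1 \<or> Rep_bit0 i = 2 \<or> Rep_bit0 i = 3" by auto
  moreover have "Rep_bit0 (2::4) = 2" "Rep_bit0 (3::4) = 3" by (simp_all add: bit0.Rep_numeral)
  ultimately show ?thesis by (simp only: bit0.Rep_inject_sym bit0.Rep_0 bit0.Rep_1)
qed
lemma UNIV4: "(UNIV::4 set) = {0,1,2,3}" using four_cases by blast
lemma all4: "(\<forall>i::4. P i) \<longleftrightarrow> P 0 \<and> P 1 \<and> P 2 \<and> P 3"
proof
  assume a: "P 0 \<and> P 1 \<and> P 2 \<and> P 3"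
  show "\<forall>i. P i"
  proof
    fix i show "P i" using four_cases[of i] a by (elim disjE) simp_all
  qed
qed simp
lemma sum4: "(\<Sum>i\<in>(UNIV::4 set). f i) = f 0 + f 1 + f 2 + f 3"
  unfolding UNIV4 by (simp add: add.assoc)

definition nx :: "4 \<Rightarrow> nat" where "nx i = nat (Rep_bit0 i) + 1"
lemma nx_simps[simp]: "nx 0 = 1" "nx 1 = 2" "nx 2 = 3" "nx 3 = 4"
  by (simp_all add: nx_def bit0.Rep_numeral bit0.Rep_0 bit0.Rep_1)
lemma nx_range: "nx i \<in> {1..4}" using four_cases[of i] by (elim disjE) simp_all
lemma nx_inj: "nx i = nx j \<longleftrightarrow> i = j"
  using four_cases[of i] four_cases[of j] by (elim disjE) simp_all

definition ebar :: "nat \<Rightarrow> 3^4" where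
  "ebar k = (\<chi> i. if k = 5 then -1 else if nx i = k then 1 else 0)"

definition rho0 :: "(nat \<Rightarrow> nat) \<Rightarrow> 3^4^4" where
  "rho0 p = (\<chi> i j. ebar (p (nx j)) $ i)"

lemma mm_col: "((A::'a::semiring_1^'n^'m) ** B) $ i $ j = (A *v (\<chi> k. B $ k $ j)) $ i"
  by (simp add: matrix_matrix_mult_def matrix_vector_mult_def)

lemma ebar_sum5: "(\<Sum>m\<in>{1..5}. ebar m $ i) = 0"
proof -
  have "{1..5::nat} = {1,2,3,4,5}" by auto
  then show ?thesis using four_cases[of i] by (auto simp: ebar_def)
qed

lemma rho0_ebar:
  assumes p: "p permutes {1..5}" and k: "k \<in> {1..5}"
  shows "rho0 p *v ebar k = ebar (p k)"
proof (cases "k = 5")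
  case False
  then have k4: "k \<in> {1..4}" using k by auto
  show ?thesis
  proof (simp add: vec_eq_iff, rule allI)
    fix i
    have "(rho0 p *v ebar k) $ i = (\<Sum>j\<in>UNIV. rho0 p $ i $ j * ebar k $ j)"
      by (simp add: matrix_vector_mult_def)
    also have "\<dots> = (\<Sum>j\<in>UNIV. if nx j = k then ebar (p k) $ i else 0)"
      using False by (intro sum.cong) (auto simp: rho0_def ebar_def)
    also have "\<dots> = ebar (p k) $ i"
    proof -
      have "k = 1 \<or> k = 2 \<or> k = 3 \<or> k = 4" using k4 by auto
      then show ?thesis by (elim disjE) (simp_all add: sum4)
    qed
    finally show "(rho0 p *v ebar k) $ i = ebar (p k) $ i" .
  qed
next
  case True
  show ?thesis
  proof (simp add: vec_eq_iff, rule allI)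
    fix i
    have "(rho0 p *v ebar k) $ i = (\<Sum>j\<in>UNIV. rho0 p $ i $ j * ebar k $ j)"
      by (simp add: matrix_vector_mult_def)
    also have "\<dots> = - (\<Sum>j\<in>UNIV. ebar (p (nx j)) $ i)"
      using True by (simp add: rho0_def ebar_def sum_negf)
    also have "(\<Sum>j\<in>UNIV. ebar (p (nx j)) $ i) = (\<Sum>m\<in>{1..4}. ebar (p m) $ i)"
    proof -
      have "{1..4::nat} = {1,2,3,4}" by auto
      then show ?thesis by (simp add: sum4 add.assoc)
    qed
    also have "\<dots> = (\<Sum>m\<in>{1..5}. ebar (p m) $ i) - ebar (p 5) $ i"
    proof -
      have "{1..5::nat} = insert 5 {1..4}" by auto
      then show ?thesis by simp
    qed
    also have "(\<Sum>m\<in>{1..5}. ebar (p m) $ i) = (\<Sum>m\<in>{1..5}. ebar m $ i)"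
      using sum.permute[OF p, of "\<lambda>m. ebar m $ i"] by (simp add: o_def)
    also have "\<dots> = 0" by (rule ebar_sum5)
    finally show "(rho0 p *v ebar k) $ i = ebar (p k) $ i" using True by simp
  qed
qed

lemma GL_carrier: "carrier GL4F3 = {A. invertible A}" by (simp add: GL4F3_def)
lemma GL_mult[simp]: "mult GL4F3 = (**)" by (simp add: GL4F3_def)
lemma GL_one[simp]: "one GL4F3 = mat 1" by (simp add: GL4F3_def)

lemma invertible_I: "invertible (mat 1 :: 'a::comm_semiring_1^'n^'n)"
  unfolding invertible_def by (rule exI[of _ "mat 1"]) simp

lemma GL_group: "group GL4F3"
proof (rule groupI)
  show "x \<otimes>\<^bsub>GL4F3\<^esub> y \<in> carrier GL4F3" if "x \<in> carrier GL4F3" "y \<in> carrier GL4F3" for x y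
    using that by (simp add: GL_carrier invertible_mult)
  show "\<one>\<^bsub>GL4F3\<^esub> \<in> carrier GL4F3" by (simp add: GL_carrier invertible_I)
  show "x \<otimes>\<^bsub>GL4F3\<^esub> y \<otimes>\<^bsub>GL4F3\<^esub> z = x \<otimes>\<^bsub>GL4F3\<^esub> (y \<otimes>\<^bsub>GL4F3\<^esub> z)" for x y z
    by (simp add: matrix_mul_assoc)
  show "\<one>\<^bsub>GL4F3\<^esub> \<otimes>\<^bsub>GL4F3\<^esub> x = x" for x by simp
  show "\<exists>y\<in>carrier GL4F3. y \<otimes>\<^bsub>GL4F3\<^esub> x = \<one>\<^bsub>GL4F3\<^esub>" if "x \<in> carrier GL4F3" for x
  proof -
    have "invertible x" using that by (simp add: GL_carrier)
    then obtain y where "x ** y = mat 1" "y ** x = mat 1" unfolding invertible_def by blast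
    then have "invertible y" unfolding invertible_def by blast
    then show ?thesis using \<open>y ** x = mat 1\<close> by (auto simp: GL_carrier)
  qed
qed

lemma neg_mm: "(- A :: 'a::comm_ring_1^'n^'m) ** B = - (A ** B)"
  by (simp add: vec_eq_iff matrix_matrix_mult_def sum_negf)
lemma mm_neg: "(A :: 'a::comm_ring_1^'n^'m) ** (- B) = - (A ** B)"
  by (simp add: vec_eq_iff matrix_matrix_mult_def sum_negf)

lemma col_rho0: "(\<chi> k. rho0 q $ k $ j) = ebar (q (nx j))"
  by (simp add: vec_eq_iff rho0_def)

lemma rho0_mult:
  assumes p: "p permutes {1..5}" and q: "q permutes {1..5}"
  shows "rho0 (p \<circ> q) = rho0 p ** rho0 q"
proof -
  have "(rho0 p ** rho0 q) $ i $ j = rho0 (p \<circ> q) $ i $ j" for i j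
  proof -
    have qk: "q (nx j) \<in> {1..5}" using nx_range[of j] permutes_in_image[OF q] by auto
    have "(rho0 p ** rho0 q) $ i $ j = (rho0 p *v ebar (q (nx j))) $ i"
      by (simp add: mm_col col_rho0)
    also have "\<dots> = ebar (p (q (nx j))) $ i" using rho0_ebar[OF p qk] by simp
    finally show ?thesis by (simp add: rho0_def)
  qed
  then show ?thesis by (simp add: vec_eq_iff)
qed

lemma rho0_id: "rho0 id = mat 1"
proof -
  have "rho0 id $ i $ j = mat 1 $ i $ j" for i j
    using nx_range[of j] by (auto simp: rho0_def ebar_def mat_def nx_inj)
  then show ?thesis by (simp add: vec_eq_iff)
qed

lemma rho0_invertible:
  assumes p: "p permutes {1..5}" shows "invertible (rho0 p)"
proof -
  have ip: "inv_into UNIV p permutes {1..5}" using permutes_inv[OF p] .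
  have "rho0 p ** rho0 (inv_into UNIV p) = mat 1" "rho0 (inv_into UNIV p) ** rho0 p = mat 1"
    using rho0_mult[OF p ip] rho0_mult[OF ip p] permutes_inv_o[OF p] rho0_id by auto
  then show ?thesis unfolding invertible_def by blast
qed

lemma invertible_neg: "invertible (A :: 'a::comm_ring_1^'n^'n) \<Longrightarrow> invertible (- A)"
  unfolding invertible_def by (metis neg_mm mm_neg minus_minus)

definition rhoC :: "(nat \<Rightarrow> nat) \<times> int \<Rightarrow> 3^4^4" where
  "rhoC pc = (if snd pc = 0 then rho0 (fst pc) else - rho0 (fst pc))"

lemma A5xC2_carrier: "carrier A5xC2 = carrier (alt_group 5) \<times> {0..<2}"
  by (simp add: A5xC2_def carrier_integer_mod_group)
lemma A5xC2_mult: "(p, c) \<otimes>\<^bsub>A5xC2\<^esub> (q, d) = (p \<circ> q, (c + d) mod 2)"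
  by (simp add: A5xC2_def alt_group_mult)
lemma A5xC2_group: "group A5xC2"
  unfolding A5xC2_def by (intro DirProd_group alt_group_is_group group_integer_mod_group)

lemma rhoC_hom: "rhoC \<in> hom A5xC2 GL4F3"
proof (rule homI)
  fix x assume "x \<in> carrier A5xC2"
  then show "rhoC x \<in> carrier GL4F3"
    by (auto simp: A5xC2_carrier rhoC_def GL_carrier alt_group_carrier rho0_invertible invertible_neg)
next
  fix x y assume x: "x \<in> carrier A5xC2" and y: "y \<in> carrier A5xC2"
  obtain p c where pc: "x = (p, c)" by force
  obtain q d where qd: "y = (q, d)" by force
  have p: "p permutes {1..5}" and q: "q permutes {1..5}" and c: "c = 0 \<or> c = 1" and d: "d = 0 \<or> d = 1"
    using x y pc qd by (auto simp: A5xC2_carrier alt_group_carrier)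
  show "rhoC (x \<otimes>\<^bsub>A5xC2\<^esub> y) = rhoC x \<otimes>\<^bsub>GL4F3\<^esub> rhoC y"
    using c d unfolding pc qd A5xC2_mult
    by (auto simp: rhoC_def rho0_mult[OF p q] neg_mm mm_neg)
qed

lemma ebar_cases: "k \<in> {1..5::nat} \<Longrightarrow> k = 1 \<or> k = 2 \<or> k = 3 \<or> k = 4 \<or> k = 5" by auto

lemma ebar_inj: assumes "a \<in> {1..5}" "b \<in> {1..5}" "ebar a = ebar b" shows "a = b"
proof -
  have "ebar a $ 0 = ebar b $ 0" "ebar a $ 1 = ebar b $ 1" "ebar a $ 2 = ebar b $ 2" "ebar a $ 3 = ebar b $ 3"
    using assms(3) by simp_all
  then show ?thesis using ebar_cases[OF assms(1)] ebar_cases[OF assms(2)]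
    by (elim disjE) (simp_all add: ebar_def)
qed

lemma ebar_neg: assumes "a \<in> {1..5}" "b \<in> {1..5}" shows "ebar a \<noteq> - ebar b"
proof
  assume e: "ebar a = - ebar b"
  have "ebar a $ 0 = - ebar b $ 0" "ebar a $ 1 = - ebar b $ 1" "ebar a $ 2 = - ebar b $ 2" "ebar a $ 3 = - ebar b $ 3"
    using e by simp_all
  then show False using ebar_cases[OF assms(1)] ebar_cases[OF assms(2)]
    by (elim disjE) (simp_all add: ebar_def)
qed

lemma perm5_eq:
  fixes p q :: "nat \<Rightarrow> nat"
  assumes p: "p permutes {1..5}" and q: "q permutes {1..5}" and eq: "\<And>m. m \<in> {1..4} \<Longrightarrow> p m = q m"
  shows "p = q"
proof -
  have "p 5 = q 5"
  proof (rule ccontr)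
    assume ne: "p 5 \<noteq> q 5"
    have "q 5 \<in> {1..5}" using permutes_in_image[OF q] by simp
    then have "q 5 \<in> p ` {1..5}" using permutes_image[OF p] by simp
    then obtain m where m: "m \<in> {1..5}" "q 5 = p m" by blast
    have "m \<noteq> 5" using ne m(2) by auto
    then have m4: "m \<in> {1..4}" using m(1) by auto
    have "q 5 = q m" using m(2) eq[OF m4] by simp
    then have "5 = m" using injD[OF permutes_inj[OF q]] by blast
    then show False using \<open>m \<noteq> 5\<close> by simp
  qed
  show ?thesis
  proof
    fix n show "p n = q n"
    proof (cases "n \<in> {1..5}")
      case True
      then consider "n \<in> {1..4}" | "n = 5" by fastforce
      then show ?thesis
      proof cases
        case 1 then show ?thesis by (rule eq)
      next
        case 2 then show ?thesis using \<open>p 5 = q 5\<close> by simp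
      qed
    next
      case False
      then show ?thesis using permutes_not_in[OF p False] permutes_not_in[OF q False] by simp
    qed
  qed
qed

lemma rho0_col: "rho0 p $ i $ j = ebar (p (nx j)) $ i" by (simp add: rho0_def)

lemma rhoC_inj: "inj_on rhoC (carrier A5xC2)"
proof (rule inj_onI)
  fix x y assume x: "x \<in> carrier A5xC2" and y: "y \<in> carrier A5xC2" and e: "rhoC x = rhoC y"
  obtain p c where pc: "x = (p, c)" by force
  obtain q d where qd: "y = (q, d)" by force
  have p: "p permutes {1..5}" and q: "q permutes {1..5}" and c: "c = 0 \<or> c = 1" and d: "d = 0 \<or> d = 1"
    using x y pc qd by (auto simp: A5xC2_carrier alt_group_carrier)
  have pm: "p m \<in> {1..5}" "q m \<in> {1..5}" if "m \<in> {1..4}" for m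
    using that permutes_in_image[OF p] permutes_in_image[OF q] by auto
  have colj: "ebar (p (nx j)) = ebar (q (nx j))" if "rho0 p = rho0 q" for j
    using that by (simp add: vec_eq_iff rho0_col[symmetric])
  have colj': "ebar (p (nx j)) = - ebar (q (nx j))" if "rho0 p = - rho0 q" for j
    using that by (simp add: vec_eq_iff rho0_col[symmetric])
  show "x = y"
  proof (cases "c = d")
    case True
    then have "rho0 p = rho0 q" using e c unfolding pc qd rhoC_def by auto
    have "p m = q m" if "m \<in> {1..4}" for m
    proof -
      have "m = nx 0 \<or> m = nx 1 \<or> m = nx 2 \<or> m = nx 3" using that by auto
      then obtain j where "m = nx j" by blast
      then show ?thesis using colj[OF \<open>rho0 p = rho0 q\<close>, of j] ebar_inj pm that by blast
    qed
    then have "p = q" using perm5_eq[OF p q] by blast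
    then show ?thesis using pc qd True by simp
  next
    case False
    then have "rho0 p = - rho0 q \<or> - rho0 p = rho0 q" using e c d unfolding pc qd rhoC_def by auto
    then show ?thesis
    proof
      assume "rho0 p = - rho0 q"
      then show ?thesis using colj'[of 0] ebar_neg pm[of 1] by auto
    next
      assume "- rho0 p = rho0 q"
      then have "rho0 q = - rho0 p" by simp
      then have "\<forall>i. rho0 q $ i $ 0 = - rho0 p $ i $ 0" by (simp add: vec_eq_iff)
      then have "ebar (q (nx 0)) = - ebar (p (nx 0))" unfolding rho0_col by (simp add: vec_eq_iff)
      then show ?thesis using ebar_neg pm[of 1] by auto
    qed
  qed
qed

definition H0 :: "(3^4^4) set" where "H0 = rhoC ` carrier A5xC2"

lemma H0_in: "H0 \<in> subgroups_iso GL4F3 A5xC2"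
proof -
  have gh: "group_hom A5xC2 GL4F3 rhoC"
    unfolding group_hom_def group_hom_axioms_def using A5xC2_group GL_group rhoC_hom by blast
  have sg: "subgroup H0 GL4F3" unfolding H0_def using group_hom.img_is_subgroup[OF gh] .
  have "rhoC \<in> iso A5xC2 (GL4F3\<lparr>carrier := H0\<rparr>)"
  proof (rule isoI)
    show "rhoC \<in> hom A5xC2 (GL4F3\<lparr>carrier := H0\<rparr>)"
      using rhoC_hom unfolding hom_def H0_def by auto
    show "bij_betw rhoC (carrier A5xC2) (carrier (GL4F3\<lparr>carrier := H0\<rparr>))"
      using rhoC_inj unfolding bij_betw_def H0_def by simp
  qed
  then have "A5xC2 \<cong> GL4F3\<lparr>carrier := H0\<rparr>" by (rule is_isoI)
  then have "GL4F3\<lparr>carrier := H0\<rparr> \<cong> A5xC2" using group.iso_sym[OF A5xC2_group] by blast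
  then show ?thesis using sg unfolding subgroups_iso_def by blast
qed

definition sg :: "nat \<Rightarrow> nat" where
  "sg = Transposition.transpose 1 5 \<circ> Transposition.transpose 1 4 \<circ> Transposition.transpose 1 3 \<circ> Transposition.transpose (1::nat) 2"
definition px :: "nat \<Rightarrow> nat" where "px = Transposition.transpose 1 2 \<circ> Transposition.transpose (3::nat) 4"
definition py :: "nat \<Rightarrow> nat" where "py = Transposition.transpose 1 3 \<circ> Transposition.transpose (2::nat) 4"
definition pc :: "nat \<Rightarrow> nat" where "pc = Transposition.transpose 2 4 \<circ> Transposition.transpose (2::nat) 3"

lemma perm_tr: "permutation (Transposition.transpose (a::nat) b)" by (simp add: permutation_swap_id)

lemma sg_alt: "sg \<in> carrier (alt_group 5)"
proof -
  have "sg permutes {1..5}" unfolding sg_def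
    by (intro permutes_compose permutes_swap_id) auto
  moreover have "evenperm sg" unfolding sg_def
    by (simp add: evenperm_comp perm_tr permutation_compose evenperm_swap)
  ultimately show ?thesis by (simp add: alt_group_carrier)
qed

lemma alt4: "p permutes {1..4} \<Longrightarrow> evenperm p \<Longrightarrow> p \<in> carrier (alt_group 4)"
  by (simp add: alt_group_carrier)

lemma px_alt4: "px \<in> carrier (alt_group 4)" and py_alt4: "py \<in> carrier (alt_group 4)"
  and pc_alt4: "pc \<in> carrier (alt_group 4)"
  unfolding px_def py_def pc_def
  by (auto intro!: alt4 permutes_compose permutes_swap_id
      simp: evenperm_comp perm_tr permutation_compose evenperm_swap)

lemma alt4_alt5: "p \<in> carrier (alt_group 4) \<Longrightarrow> p \<in> carrier (alt_group 5)"
  by (auto simp: alt_group_carrier intro: permutes_subset)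

lemma sg_vals[simp]: "sg 1 = 2" "sg 2 = 3" "sg 3 = 4" "sg 4 = 5" "sg 5 = 1"
  by (simp_all add: sg_def Transposition.transpose_def)
lemma sg_out: "n \<notin> {1..5} \<Longrightarrow> sg n = n"
  by (auto simp: sg_def Transposition.transpose_def)
lemma sg_1'[simp]: "sg (Suc 0) = 2" by (simp add: sg_def Transposition.transpose_def)
lemma funpow5: "(f^^5) n = f (f (f (f (f n))))" by (simp add: numeral_eq_Suc)
lemma funpow4: "(f^^4) n = f (f (f (f n)))" by (simp add: numeral_eq_Suc)
lemma funpow3: "(f^^3) n = f (f (f n))" by (simp add: numeral_eq_Suc)
lemma funpow2: "(f^^2) n = f (f n)" by (simp add: numeral_eq_Suc)
lemma sg_pow5: "sg^^5 = id"
proof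
  fix n show "(sg^^5) n = id n"
  proof (cases "n \<in> {1..5}")
    case True then have "n = 1 \<or> n = 2 \<or> n = 3 \<or> n = 4 \<or> n = 5" by auto
    then show ?thesis unfolding funpow5 by (elim disjE) simp_all
  next
    case False then show ?thesis unfolding funpow5 by (simp add: sg_out)
  qed
qed
lemma sg_ne: "sg \<noteq> id"
proof
  assume "sg = id" then have "sg 1 = 1" by simp
  then show False by simp
qed
lemma sg_pow_5: "k \<in> {1..5} \<Longrightarrow> (sg^^k) 5 = k"
proof -
  assume "k \<in> {1..5}"
  then have "k = 1 \<or> k = 2 \<or> k = 3 \<or> k = 4 \<or> k = 5" by auto
  then show ?thesis by (elim disjE) (simp_all add: funpow2 funpow3 funpow4 funpow5)
qed

lemma pxpy_comm: "px \<circ> py = py \<circ> px" by (simp add: fun_eq_iff px_def py_def Transposition.transpose_def)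
lemma px_inv: "px \<circ> px = id" by (simp add: fun_eq_iff px_def Transposition.transpose_def)
lemma py_inv: "py \<circ> py = id" by (simp add: fun_eq_iff py_def Transposition.transpose_def)
lemma pc_px: "pc \<circ> px = py \<circ> pc" by (simp add: fun_eq_iff px_def py_def pc_def Transposition.transpose_def)
lemma pc_pxpy: "pc \<circ> (px \<circ> py) = px \<circ> pc" by (simp add: fun_eq_iff px_def py_def pc_def Transposition.transpose_def)
lemma px_ne: "px \<noteq> id"
proof
  assume "px = id" then have "px 1 = 1" by simp
  then show False by (simp add: px_def Transposition.transpose_def)
qed

definition kl :: "(nat \<Rightarrow> nat) \<Rightarrow> bool" where
  "kl q \<longleftrightarrow> q permutes {1..4} \<and> (\<forall>n. q (q n) = n) \<and> (\<forall>i\<in>{1..4}. q i \<noteq> i)"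

lemma kl_cases:
  assumes "kl q" shows "q = px \<or> q = py \<or> q = px \<circ> py"
proof -
  have perm: "q permutes {1..4}" and inv: "\<And>n. q (q n) = n" and fp: "\<And>i. i \<in> {1..4} \<Longrightarrow> q i \<noteq> i"
    using assms by (auto simp: kl_def)
  have out: "q n = n" if "n \<notin> {1..4}" for n using permutes_not_in[OF perm that] .
  have rng: "q i \<in> {1..4}" if "i \<in> {1..4}" for i using permutes_in_image[OF perm] that by simp
  have q1: "q 1 = 2 \<or> q 1 = 3 \<or> q 1 = 4" using rng[of 1] fp[of 1] by auto
  have q3: "q 3 \<in> {1..4}" "q 3 \<noteq> 3" using rng[of 3] fp[of 3] by auto
  have q2: "q 2 \<in> {1..4}" "q 2 \<noteq> 2" using rng[of 2] fp[of 2] by auto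
  have q4: "q 4 \<in> {1..4}" "q 4 \<noteq> 4" using rng[of 4] fp[of 4] by auto
  have qe: "q = f" if "q 1 = f 1" "q 2 = f 2" "q 3 = f 3" "q 4 = f 4" "\<And>n. n \<notin> {1..4} \<Longrightarrow> f n = n" for f
  proof
    fix n show "q n = f n"
    proof (cases "n \<in> {1..4}")
      case True then have "n = 1 \<or> n = 2 \<or> n = 3 \<or> n = 4" by auto
      then show ?thesis using that by auto
    next
      case False then show ?thesis using out that by simp
    qed
  qed
  from q1 show ?thesis
  proof (elim disjE)
    assume a: "q 1 = 2"
    then have b: "q 2 = 1" using inv[of 1] by simp
    have "q 3 = 4"
    proof -
      have "q 3 \<noteq> 1" using inv[of 3] a by auto
      moreover have "q 3 \<noteq> 2" using inv[of 3] b by auto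
      ultimately show ?thesis using q3 by auto
    qed
    moreover then have "q 4 = 3" using inv[of 3] by simp
    ultimately have "q = px" using a b by (intro qe) (auto simp: px_def Transposition.transpose_def)
    then show ?thesis by simp
  next
    assume a: "q 1 = 3"
    then have b: "q 3 = 1" using inv[of 1] by simp
    have "q 2 = 4"
    proof -
      have "q 2 \<noteq> 1" using inv[of 2] a by auto
      moreover have "q 2 \<noteq> 3" using inv[of 2] b by auto
      ultimately show ?thesis using q2 by auto
    qed
    moreover then have "q 4 = 2" using inv[of 2] by simp
    ultimately have "q = py" using a b by (intro qe) (auto simp: py_def Transposition.transpose_def)
    then show ?thesis by simp
  next
    assume a: "q 1 = 4"
    then have b: "q 4 = 1" using inv[of 1] by simp
    have "q 2 = 3"
    proof -
      have "q 2 \<noteq> 1" using inv[of 2] a by auto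
      moreover have "q 2 \<noteq> 4" using inv[of 2] b by auto
      ultimately show ?thesis using q2 by auto
    qed
    moreover then have "q 3 = 2" using inv[of 2] by simp
    ultimately have "q = px \<circ> py" using a b by (intro qe) (auto simp: px_def py_def Transposition.transpose_def)
    then show ?thesis by simp
  qed
qed

lemma three_cycle_facts:
  assumes "q \<in> three_cycles 4"
  shows "q permutes {1..4}" "\<And>n. q (q (q n)) = n" "q \<in> carrier (alt_group 4)"
proof -
  obtain cs where cs: "q = cycle_of_list cs" "cycle cs" "length cs = 3" "set cs \<subseteq> {1..4}"
    using assms by auto
  obtain a b c where abc: "cs = [a, b, c]" using stupid_lemma[OF cs(3)] by auto
  show "q permutes {1..4}" using permutes_subset[OF cycle_permutes cs(4)] cs(1) by simp
  show "q (q (q n)) = n" for n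
    using cs(2) unfolding cs(1) abc by (auto simp: Transposition.transpose_def)
  show "q \<in> carrier (alt_group 4)" using three_cycles_incl assms by blast
qed

lemma conj_kl:
  assumes q: "q permutes {1..4}" and q3: "\<And>n. q (q (q n)) = n" and u: "kl u"
  shows "kl (q \<circ> q \<circ> u \<circ> q)"
proof -
  have up: "u permutes {1..4}" and ui: "\<And>n. u (u n) = n" and uf: "\<And>i. i \<in> {1..4} \<Longrightarrow> u i \<noteq> i"
    using u by (auto simp: kl_def)
  have "(q \<circ> q \<circ> u \<circ> q) permutes {1..4}" by (intro permutes_compose q up)
  moreover have "(q \<circ> q \<circ> u \<circ> q) ((q \<circ> q \<circ> u \<circ> q) n) = n" for n
    by (simp add: q3 ui)
  moreover have "(q \<circ> q \<circ> u \<circ> q) i \<noteq> i" if "i \<in> {1..4}" for i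
  proof
    assume "(q \<circ> q \<circ> u \<circ> q) i = i"
    then have "q (q (q (u (q i)))) = q i" by simp
    then have "u (q i) = q i" using q3 by simp
    moreover have "q i \<in> {1..4}" using permutes_in_image[OF q] that by simp
    ultimately show False using uf by blast
  qed
  ultimately show ?thesis by (simp add: kl_def)
qed

lemma kl_px: "kl px" and kl_py: "kl py"
  unfolding kl_def px_def py_def
  by (auto intro!: permutes_compose permutes_swap_id simp: Transposition.transpose_def)

lemma vnum3[simp]: "(3::3^4) = 0" by (simp add: vec_eq_iff)
lemma vnum4[simp]: "(4::3^4) = 1" by (simp add: vec_eq_iff)
lemma vnum2: "(2::3^4) = -1" by (simp add: vec_eq_iff)

lemma mv_neg: "(A::'a::comm_ring_1^'n^'m) *v - x = - (A *v x)"
  by (simp add: vec_eq_iff matrix_vector_mult_def sum_negf)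
lemma mv_diff: "(A::'a::comm_ring_1^'n^'m) *v (x - y) = A *v x - A *v y"
  by (simp add: vec_eq_iff matrix_vector_mult_def sum_subtractf right_diff_distrib)

lemma A5_comp: "p \<in> carrier (alt_group 5) \<Longrightarrow> q \<in> carrier (alt_group 5) \<Longrightarrow> p \<circ> q \<in> carrier (alt_group 5)"
  using monoid.m_closed[OF group.is_monoid[OF alt_group_is_group], of p 5 q] by (simp add: alt_group_mult)
lemma A5_id: "id \<in> carrier (alt_group 5)"
  using monoid.one_closed[OF group.is_monoid[OF alt_group_is_group], of 5] by (simp add: alt_group_one)
lemma A5_pow: "p \<in> carrier (alt_group 5) \<Longrightarrow> p^^k \<in> carrier (alt_group 5)"
  by (induction k) (simp_all add: A5_id A5_comp)

definition sgn :: "bool \<Rightarrow> 3^4 \<Rightarrow> 3^4" where "sgn b w = (if b then w else - w)"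

locale rep =
  fixes \<psi> :: "(nat \<Rightarrow> nat) \<Rightarrow> 3^4^4"
  assumes hom: "\<psi> \<in> hom (alt_group 5) GL4F3"
      and inj: "inj_on \<psi> (carrier (alt_group 5))"
begin

definition act :: "(nat \<Rightarrow> nat) \<Rightarrow> 3^4 \<Rightarrow> 3^4" where "act p w = \<psi> p *v w"

lemma gh: "group_hom (alt_group 5) GL4F3 \<psi>"
  unfolding group_hom_def group_hom_axioms_def using alt_group_is_group GL_group hom by blast

lemma psi_mult: "p \<in> carrier (alt_group 5) \<Longrightarrow> q \<in> carrier (alt_group 5) \<Longrightarrow> \<psi> (p \<circ> q) = \<psi> p ** \<psi> q"
  using hom_mult[OF hom, of p q] by (simp add: alt_group_mult)
lemma psi_id: "\<psi> id = mat 1"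
  using group_hom.hom_one[OF gh] by (simp add: alt_group_one)
lemma psi_carrier: "p \<in> carrier (alt_group 5) \<Longrightarrow> \<psi> p \<in> carrier GL4F3"
  using hom by (auto simp: hom_def)

lemma act_mult: "p \<in> carrier (alt_group 5) \<Longrightarrow> q \<in> carrier (alt_group 5) \<Longrightarrow> act (p \<circ> q) w = act p (act q w)"
  by (simp add: act_def psi_mult matrix_vector_mul_assoc)
lemma act_id[simp]: "act id w = w" by (simp add: act_def psi_id)
lemma act_id'[simp]: "act (\<lambda>a. a) w = w" using act_id by (simp add: id_def)
lemma act_add: "act p (a + b) = act p a + act p b" by (simp add: act_def matrix_vector_right_distrib)
lemma act_neg: "act p (- a) = - act p a" by (simp add: act_def mv_neg)
lemma act_diff: "act p (a - b) = act p a - act p b" by (simp add: act_def mv_diff)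
lemma act_0[simp]: "act p 0 = 0" by (simp add: act_def)
lemma act_additive: "additive (act p)" by (simp add: additive_def act_add)
lemma act_sgn: "act p (sgn b w) = sgn b (act p w)" by (simp add: sgn_def act_neg)

lemma act_inv: "p \<in> carrier (alt_group 5) \<Longrightarrow> act (inv' p) (act p w) = w"
proof -
  assume p: "p \<in> carrier (alt_group 5)"
  have "inv' p \<circ> p = id" using permutes_inv_o(2)[of p "{1..5}"] p by (simp add: alt_group_carrier)
  then have "act (inv' p \<circ> p) w = w" by simp
  then show ?thesis using act_mult[OF alt_group_inv_closed[OF p] p, of w] by simp
qed
lemma act_inj: "p \<in> carrier (alt_group 5) \<Longrightarrow> act p a = act p b \<Longrightarrow> a = b"
  by (metis act_inv)
lemma act_nz: "p \<in> carrier (alt_group 5) \<Longrightarrow> w \<noteq> 0 \<Longrightarrow> act p w \<noteq> 0"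
  using act_inj[of p w 0] by auto
lemma act_trivial: "p \<in> carrier (alt_group 5) \<Longrightarrow> (\<And>w. act p w = w) \<Longrightarrow> p = id"
proof -
  assume p: "p \<in> carrier (alt_group 5)" and t: "\<And>w. act p w = w"
  have "\<psi> p = mat 1" using t by (simp add: matrix_eq act_def)
  then have "\<psi> p = \<psi> id" by (simp add: psi_id)
  then show "p = id" using inj p A5_id by (meson inj_onD)
qed

lemma act_pow: "p \<in> carrier (alt_group 5) \<Longrightarrow> (act p ^^ k) w = act (p^^k) w"
proof (induction k)
  case 0 then show ?case by simp
next
  case (Suc k)
  have "(act p ^^ Suc k) w = act p ((act p ^^ k) w)" by simp
  also have "\<dots> = act p (act (p^^k) w)" using Suc.IH Suc.prems by simp
  also have "\<dots> = act (p \<circ> p^^k) w" by (rule act_mult[OF Suc.prems A5_pow[OF Suc.prems], symmetric])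
  also have "p \<circ> p^^k = p^^Suc k" by (simp only: funpow.simps)
  finally show ?case .
qed

abbreviation "g \<equiv> act sg"

lemma g5: "(g^^5) w = w" using act_pow[OF sg_alt] by (simp add: sg_pow5)

lemma phi5: "w + g w + (g^^2) w + (g^^3) w + (g^^4) w = 0"
proof -
  have "\<exists>w0. g w0 \<noteq> w0"
  proof (rule ccontr)
    assume "\<not> (\<exists>w0. g w0 \<noteq> w0)"
    then have "sg = id" using act_trivial[OF sg_alt] by blast
    then show False using sg_ne by simp
  qed
  then obtain w0 where "g w0 \<noteq> w0" by blast
  then show ?thesis using phi5_zero[OF act_additive g5] by blast
qed

lemma g_nofix: "g w = w \<Longrightarrow> w = 0"
proof -
  assume gw: "g w = w"
  have fw: "(g^^n) w = w" for n by (induction n) (use gw in auto)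
  have "w + g w + (g^^2) w + (g^^3) w + (g^^4) w = (w + w + w) + w + w"
    using fw[of 2] fw[of 3] fw[of 4] gw by (simp only:)
  then have "0 = w + w" using phi5[of w] by (simp only: tripleV add_0_left)
  then show "w = 0" using doubleV0 by simp
qed

abbreviation "X \<equiv> act px"
abbreviation "Y \<equiv> act py"
abbreviation "C \<equiv> act pc"

lemma px5: "px \<in> carrier (alt_group 5)" using alt4_alt5[OF px_alt4] .
lemma py5: "py \<in> carrier (alt_group 5)" using alt4_alt5[OF py_alt4] .
lemma pc5: "pc \<in> carrier (alt_group 5)" using alt4_alt5[OF pc_alt4] .

lemma XX[simp]: "X (X w) = w" using act_mult[OF px5 px5, of w] px_inv by simp
lemma YY[simp]: "Y (Y w) = w" using act_mult[OF py5 py5, of w] py_inv by simp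
lemma YX[simp]: "Y (X w) = X (Y w)" using act_mult[OF px5 py5, of w] act_mult[OF py5 px5, of w] pxpy_comm by simp
lemma CX: "C (X w) = Y (C w)" using act_mult[OF pc5 px5, of w] act_mult[OF py5 pc5, of w] pc_px by simp
lemma CXY: "C (X (Y w)) = X (C w)"
  using act_mult[OF pc5 A5_comp[OF px5 py5], of w] act_mult[OF px5 pc5, of w] act_mult[OF px5 py5, of w] pc_pxpy by simp

definition V :: "bool \<Rightarrow> bool \<Rightarrow> (3^4) set" where
  "V b1 b2 = {w. X w = sgn b1 w \<and> Y w = sgn b2 w}"
definition Q :: "bool \<Rightarrow> bool \<Rightarrow> 3^4 \<Rightarrow> 3^4" where
  "Q b1 b2 w = w + sgn b1 (X w) + sgn b2 (Y w) + sgn (b1 = b2) (X (Y w))"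

lemma Q_in: "Q b1 b2 w \<in> V b1 b2"
  by (cases b1; cases b2) (simp_all add: V_def Q_def sgn_def act_add act_neg act_diff algebra_simps)

lemma Q_id: "w \<in> V b1 b2 \<Longrightarrow> Q b1 b2 w = w"
  by (cases b1; cases b2) (simp_all add: V_def Q_def sgn_def act_add act_neg act_diff algebra_simps vnum2)

lemma Q_zero: "w \<in> V b1' b2' \<Longrightarrow> (b1', b2') \<noteq> (b1, b2) \<Longrightarrow> Q b1 b2 w = 0"
  by (cases b1; cases b2; cases b1'; cases b2') (simp_all add: V_def Q_def sgn_def act_add act_neg act_diff algebra_simps vnum2)

lemma Q_sum: "Q True True w + Q True False w + Q False True w + Q False False w = w"
  by (simp add: Q_def sgn_def act_add act_neg act_diff algebra_simps)

lemma Q_add: "Q b1 b2 (a + b) = Q b1 b2 a + Q b1 b2 b"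
  by (cases b1; cases b2) (simp_all add: Q_def sgn_def act_add act_neg act_diff algebra_simps)

end

lemma arith_cube: assumes "(a::nat) * b^3 = 81" shows "b = 1 \<or> (b = 3 \<and> a = 3)"
proof -
  have "a \<ge> 1" using assms by (cases a) auto
  then have "b^3 \<le> 81" using assms by (metis le_add2 mult.commute mult_le_mono2 nat_mult_1_right le_Suc_ex)
  have "b \<le> 4"
  proof (rule ccontr)
    assume "\<not> b \<le> 4" then have "5^3 \<le> b^3" by (intro power_mono) auto
    then show False using \<open>b^3 \<le> 81\<close> by simp
  qed
  moreover have "b \<noteq> 0" using assms by (cases b) auto
  ultimately have "b = 1 \<or> b = 2 \<or> b = 3 \<or> b = 4" by auto
  then show ?thesis using assms by (elim disjE) (simp_all, presburger+)
qed

context rep begin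

lemma Q_V0: "0 \<in> V b1 b2" by (simp add: V_def sgn_def)

lemma V_neg: "w \<in> V b1 b2 \<Longrightarrow> - w \<in> V b1 b2" by (simp add: V_def sgn_def act_neg)

lemma card_prod: "card (V True True) * card (V True False) * card (V False True) * card (V False False) = 81"
proof -
  let ?P = "V True True \<times> V True False \<times> V False True \<times> V False False"
  define f where "f = (\<lambda>(a::3^4, b::3^4, c::3^4, d::3^4). a + b + c + d)"
  have Qf: "Q b1 b2 (a + b + c + d) = Q b1 b2 a + Q b1 b2 b + Q b1 b2 c + Q b1 b2 d" for b1 b2 a b c d
    by (simp add: Q_add)
  have proj: "Q True True (f t) = fst t" "Q True False (f t) = fst (snd t)"
    "Q False True (f t) = fst (snd (snd t))" "Q False False (f t) = snd (snd (snd t))" if "t \<in> ?P" for t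
    using that unfolding f_def by (auto simp: Qf Q_id Q_zero)
  have "inj_on f ?P"
  proof (rule inj_onI)
    fix s t assume s: "s \<in> ?P" and t: "t \<in> ?P" and e: "f s = f t"
    show "s = t" using proj[OF s] proj[OF t] e by (metis prod.collapse)
  qed
  moreover have "f ` ?P = UNIV"
  proof -
    have "w \<in> f ` ?P" for w
    proof
      show "w = f (Q True True w, Q True False w, Q False True w, Q False False w)"
        unfolding f_def using Q_sum[of w] by simp
      show "(Q True True w, Q True False w, Q False True w, Q False False w) \<in> ?P" by (simp add: Q_in)
    qed
    then show ?thesis by blast
  qed
  ultimately have "card ?P = card (UNIV :: (3^4) set)" by (metis card_image)
  then show ?thesis by (simp add: card_cartesian_product cardV mult.assoc)
qed

lemma C_maps: "w \<in> V b1 b2 \<Longrightarrow> C w \<in> V (b1 = b2) b1"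
proof -
  assume w: "w \<in> V b1 b2"
  have "Y (C w) = C (X w)" by (simp add: CX)
  also have "\<dots> = sgn b1 (C w)" using w by (simp add: V_def act_sgn)
  finally have 1: "Y (C w) = sgn b1 (C w)" .
  have "X (C w) = C (X (Y w))" by (simp add: CXY)
  also have "\<dots> = sgn (b1 = b2) (C w)" using w by (cases b1; cases b2) (simp_all add: V_def sgn_def act_neg)
  finally have 2: "X (C w) = sgn (b1 = b2) (C w)" .
  show ?thesis using 1 2 by (simp add: V_def)
qed

lemma card_C: "card (V b1 b2) \<le> card (V (b1 = b2) b1)"
proof (rule card_inj_on_le)
  show "inj_on C (V b1 b2)" using act_inj[OF pc5] by (meson inj_onI)
  show "C ` V b1 b2 \<subseteq> V (b1 = b2) b1" using C_maps by blast
qed simp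

lemma card_A3: "card (V True True) = 3"
proof -
  have c1: "card (V True False) \<le> card (V False True)" using card_C[of True False] by simp
  have c2: "card (V False True) \<le> card (V False False)" using card_C[of False True] by simp
  have c3: "card (V False False) \<le> card (V True False)" using card_C[of False False] by simp
  define b where "b = card (V True False)"
  have eq: "card (V False True) = b" "card (V False False) = b" using c1 c2 c3 b_def by auto
  have "card (V True True) * b^3 = 81" using card_prod eq b_def by (simp add: power3_eq_cube mult.assoc)
  then have "b = 1 \<or> (b = 3 \<and> card (V True True) = 3)" by (rule arith_cube)
  moreover have "b \<noteq> 1"
  proof
    assume "b = 1"
    have single: "V b1 b2 = {0}" if c1: "card (V b1 b2) = 1" for b1 b2
    proof -
      obtain x where x: "V b1 b2 = {x}" using c1 card_1_singleton_iff[of "V b1 b2"] by auto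
      then show ?thesis using Q_V0[of b1 b2] by simp
    qed
    have "card (V True False) = 1" "card (V False True) = 1" "card (V False False) = 1"
      using eq b_def \<open>b = 1\<close> by simp_all
    then have z: "V True False = {0}" "V False True = {0}" "V False False = {0}"
      using single by blast+
    have "X w = w" for w
    proof -
      have "Q True False w \<in> {0}" "Q False True w \<in> {0}" "Q False False w \<in> {0}"
        using z Q_in[of True False w] Q_in[of False True w] Q_in[of False False w] by simp_all
      then have "Q True True w = w" using Q_sum[of w] by simp
      then have "w \<in> V True True" using Q_in[of True True w] by simp
      then show ?thesis by (simp add: V_def sgn_def)
    qed
    then have "px = id" using act_trivial[OF px5] by blast
    then show False using px_ne by simp
  qed
  ultimately show ?thesis by simp
qed

end

context rep begin

definition v0 :: "3^4" where "v0 = (SOME v. v \<in> V True True \<and> v \<noteq> 0)"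

lemma v0: "v0 \<in> V True True" "v0 \<noteq> 0"
proof -
  have "\<exists>v. v \<in> V True True \<and> v \<noteq> 0"
  proof (rule ccontr)
    assume "\<not> (\<exists>v. v \<in> V True True \<and> v \<noteq> 0)"
    then have "V True True \<subseteq> {0}" by blast
    then have "card (V True True) \<le> card {0::3^4}" by (intro card_mono) simp_all
    then show False using card_A3 by simp
  qed
  then have "v0 \<in> V True True \<and> v0 \<noteq> 0" unfolding v0_def by (rule someI_ex)
  then show "v0 \<in> V True True" "v0 \<noteq> 0" by simp_all
qed

lemma Xv0[simp]: "X v0 = v0" and Yv0[simp]: "Y v0 = v0"
  using v0(1) by (simp_all add: V_def sgn_def)

lemma A_eq: "V True True = {0, v0, - v0}"
proof -
  have sub: "{0, v0, - v0} \<subseteq> V True True" using v0(1) Q_V0 V_neg by auto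
  have "v0 \<noteq> - v0"
  proof
    assume "v0 = - v0" then have "v0 + v0 = 0" by (metis add.right_inverse)
    then show False using doubleV0 v0(2) by blast
  qed
  then have "card {0, v0, - v0} = 3" using v0(2) by simp
  then show ?thesis using sub card_A3 by (metis card_subset_eq finite)
qed

lemma three_fix:
  assumes q: "q \<in> three_cycles 4"
  shows "act q v0 = v0"
proof -
  have qp: "q permutes {1..4}" and q3: "\<And>n. q (q (q n)) = n" and q4: "q \<in> carrier (alt_group 4)"
    using three_cycle_facts[OF q] by auto
  have q5: "q \<in> carrier (alt_group 5)" using alt4_alt5[OF q4] .
  have comm: "act u (act q v0) = act q v0" if u: "u = px \<or> u = py" for u
  proof -
    have ku: "kl u" using u kl_px kl_py by auto
    have u5: "u \<in> carrier (alt_group 5)" using u px5 py5 by auto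
    define u' where "u' = q \<circ> q \<circ> u \<circ> q"
    have "kl u'" unfolding u'_def by (rule conj_kl[OF qp q3 ku])
    then have cu: "u' = px \<or> u' = py \<or> u' = px \<circ> py" by (rule kl_cases)
    then have u'5: "u' \<in> carrier (alt_group 5)" using px5 py5 A5_comp[OF px5 py5] by auto
    have fu: "act u' v0 = v0"
    proof -
      have "act (px \<circ> py) v0 = v0" using act_mult[OF px5 py5, of v0] by simp
      then show ?thesis using cu by auto
    qed
    have e: "q \<circ> u' = u \<circ> q" unfolding u'_def by (simp add: fun_eq_iff q3)
    have "act u (act q v0) = act (u \<circ> q) v0" using act_mult[OF u5 q5] by simp
    also have "\<dots> = act (q \<circ> u') v0" using e by simp
    also have "\<dots> = act q (act u' v0)" using act_mult[OF q5 u'5] by simp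
    also have "\<dots> = act q v0" using fu by simp
    finally show ?thesis .
  qed
  have "act q v0 \<in> V True True" using comm[of px] comm[of py] by (simp add: V_def sgn_def)
  then have cases: "act q v0 = 0 \<or> act q v0 = v0 \<or> act q v0 = - v0" using A_eq by auto
  have "act q v0 \<noteq> 0" using act_nz[OF q5 v0(2)] .
  moreover have "act q v0 \<noteq> - v0"
  proof
    assume h: "act q v0 = - v0"
    have qqq: "q \<circ> q \<circ> q = id" by (simp add: fun_eq_iff q3)
    have "act (q \<circ> q \<circ> q) v0 = act q (act q (act q v0))"
      using act_mult[OF A5_comp[OF q5 q5] q5] act_mult[OF q5 q5] by simp
    also have "\<dots> = - v0" using h by (simp add: act_neg)
    finally have "v0 = - v0" using qqq by simp
    then have "v0 + v0 = 0" by (metis add.right_inverse)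
    then show False using doubleV0 v0(2) by blast
  qed
  ultimately show ?thesis using cases by blast
qed

lemma A4_fix:
  assumes p: "p \<in> carrier (alt_group 4)"
  shows "act p v0 = v0"
proof -
  have "p \<in> generate (alt_group 4) (three_cycles 4)"
    using p alt_group_carrier_as_three_cycles by blast
  then show ?thesis
  proof (induction p rule: generate.induct)
    case one
    then show ?case by (simp add: alt_group_one)
  next
    case (incl h)
    then show ?case by (rule three_fix)
  next
    case (inv h)
    have h4: "h \<in> carrier (alt_group 4)" using three_cycle_facts(3)[OF inv] .
    have "act (inv' h) v0 = act (inv' h) (act h v0)" using three_fix[OF inv] by simp
    also have "\<dots> = v0" using act_inv[OF alt4_alt5[OF h4]] by simp
    finally show ?case using alt_group_inv_equality[OF h4] by simp
  next
    case (eng h1 h2)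
    have "h1 \<in> carrier (alt_group 4)" "h2 \<in> carrier (alt_group 4)"
      using eng.hyps alt_group_carrier_as_three_cycles by blast+
    then have "act (h1 \<circ> h2) v0 = act h1 (act h2 v0)" using act_mult alt4_alt5 by blast
    also have "\<dots> = v0" using eng.IH by simp
    finally show ?case by (simp only: alt_group_mult)
  qed
qed

end

context rep begin

definition vk :: "nat \<Rightarrow> 3^4" where "vk k = act (sg^^k) v0"

lemma vk_pow: "vk k = (g^^k) v0" by (simp add: vk_def act_pow[OF sg_alt])

lemma vk5: "vk 5 = v0" by (simp only: vk_pow g5)

lemma vk_sum: "vk 1 + vk 2 + vk 3 + vk 4 + vk 5 = 0"
proof -
  have "vk 1 + vk 2 + vk 3 + vk 4 + vk 5 = v0 + g v0 + (g^^2) v0 + (g^^3) v0 + (g^^4) v0"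
    unfolding vk5 by (simp only: vk_pow funpow_1) (simp add: algebra_simps)
  then show ?thesis using phi5[of v0] by simp
qed

lemma act_vk:
  assumes p: "p \<in> carrier (alt_group 5)" and j: "j \<in> {1..5}"
  shows "act p (vk j) = vk (p j)"
proof -
  have pj: "p j \<in> {1..5}" using p j permutes_in_image[of p "{1..5}"] by (simp add: alt_group_carrier)
  define s where "s = sg^^(p j)"
  define t where "t = sg^^j"
  have s5: "s \<in> carrier (alt_group 5)" and t5: "t \<in> carrier (alt_group 5)"
    unfolding s_def t_def using A5_pow[OF sg_alt] by auto
  have sperm: "s permutes {1..5}" using s5 by (simp add: alt_group_carrier)
  define \<tau> where "\<tau> = inv' s \<circ> p \<circ> t"
  have tau5: "\<tau> \<in> carrier (alt_group 5)"
    unfolding \<tau>_def using A5_comp[OF A5_comp[OF alt_group_inv_closed[OF s5] p] t5] .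
  have "\<tau> 5 = inv' s (p (t 5))" by (simp add: \<tau>_def)
  also have "t 5 = j" unfolding t_def using sg_pow_5[OF j] .
  also have "p j = s 5" unfolding s_def using sg_pow_5[OF pj] by simp
  also have "inv' s (s 5) = 5" using permutes_inverses(2)[OF sperm] .
  finally have tau_fix: "\<tau> 5 = 5" .
  have "\<tau> permutes {1..4}"
  proof (rule permutes_superset)
    show "\<tau> permutes {1..5}" using tau5 by (simp add: alt_group_carrier)
    fix x assume "x \<in> {1..5} - {1..4::nat}" then have "x = 5" by auto
    with tau_fix show "\<tau> x = x" by simp
  qed
  then have tau4: "\<tau> \<in> carrier (alt_group 4)" using tau5 by (simp add: alt_group_carrier)
  have "s \<circ> \<tau> = (s \<circ> inv' s) \<circ> p \<circ> t" by (simp add: \<tau>_def fun_eq_iff)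
  also have "s \<circ> inv' s = id" using permutes_inv_o(1)[OF sperm] .
  finally have st: "s \<circ> \<tau> = p \<circ> t" by (simp add: fun_eq_iff)
  have "act p (vk j) = act p (act t v0)" by (simp add: vk_def t_def)
  also have "\<dots> = act (p \<circ> t) v0" using act_mult[OF p t5] by simp
  also have "\<dots> = act (s \<circ> \<tau>) v0" using st by simp
  also have "\<dots> = act s (act \<tau> v0)" using act_mult[OF s5 tau5] by simp
  also have "\<dots> = act s v0" using A4_fix[OF tau4] by simp
  also have "\<dots> = vk (p j)" by (simp add: vk_def s_def)
  finally show ?thesis .
qed

definition Pm :: "3^4^4" where "Pm = (\<chi> i j. vk (nx j) $ i)"

lemma Pm_ebar:
  assumes k: "k \<in> {1..5}" shows "Pm *v ebar k = vk k"
proof (cases "k = 5")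
  case False
  then have "k = 1 \<or> k = 2 \<or> k = 3 \<or> k = 4" using k by auto
  then show ?thesis
    by (elim disjE) (simp_all add: vec_eq_iff matrix_vector_mult_def Pm_def ebar_def sum4)
next
  case True
  have "Pm *v ebar 5 = - (vk 1 + vk 2 + vk 3 + vk 4)"
    by (simp add: vec_eq_iff matrix_vector_mult_def Pm_def ebar_def sum4 algebra_simps)
  also have "- (vk 1 + vk 2 + vk 3 + vk 4) = vk 5"
    using vk_sum by (simp only: neg_eq_iff_add_eq_0)
  finally show ?thesis using True by simp
qed

lemma col_Pm: "(\<chi> k. Pm $ k $ j) = vk (nx j)" by (simp add: vec_eq_iff Pm_def)

lemma intertwine:
  assumes p: "p \<in> carrier (alt_group 5)"
  shows "\<psi> p ** Pm = Pm ** rho0 p"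
proof -
  have pp: "p permutes {1..5}" using p by (simp add: alt_group_carrier)
  have "(\<psi> p ** Pm) $ i $ j = (Pm ** rho0 p) $ i $ j" for i j
  proof -
    have nj: "nx j \<in> {1..5}" using nx_range[of j] by auto
    have pj: "p (nx j) \<in> {1..5}" using permutes_in_image[OF pp] nj by simp
    have "(\<psi> p ** Pm) $ i $ j = act p (vk (nx j)) $ i" by (simp add: mm_col col_Pm act_def)
    also have "\<dots> = vk (p (nx j)) $ i" using act_vk[OF p nj] by simp
    also have "\<dots> = (Pm *v ebar (p (nx j))) $ i" using Pm_ebar[OF pj] by simp
    also have "\<dots> = (Pm ** rho0 p) $ i $ j" by (simp add: mm_col col_rho0)
    finally show ?thesis .
  qed
  then show ?thesis by (simp add: vec_eq_iff)
qed

lemma Pm_surj: "surj ((*v) Pm)"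
proof -
  let ?S = "range ((*v) Pm)"
  have S: "addsub ?S" unfolding addsub_def
  proof (intro conjI ballI)
    show "0 \<in> ?S" by (rule range_eqI[of _ _ 0]) simp
    fix a b assume "a \<in> ?S" "b \<in> ?S"
    then obtain c d where "a = Pm *v c" "b = Pm *v d" by blast
    then have "a + b = Pm *v (c + d)" by (simp add: matrix_vector_right_distrib)
    then show "a + b \<in> ?S" by (rule range_eqI)
  qed
  have gS: "g ` ?S \<subseteq> ?S"
  proof
    fix y assume "y \<in> g ` ?S"
    then obtain c where y: "y = g (Pm *v c)" by auto
    have "y = (\<psi> sg ** Pm) *v c" using y by (simp add: act_def matrix_vector_mul_assoc)
    also have "\<dots> = Pm *v (rho0 sg *v c)" using intertwine[OF sg_alt] by (simp add: matrix_vector_mul_assoc)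
    finally show "y \<in> ?S" by simp
  qed
  have "card ?S = 1 \<or> card ?S = 81"
    using card_1_or_81[OF S gS act_additive g5 g_nofix] .
  moreover have "vk 1 \<in> ?S"
  proof -
    have "Pm *v ebar 1 = vk 1" using Pm_ebar[of 1] by simp
    then show ?thesis by (rule range_eqI[OF sym])
  qed
  moreover have "0 \<in> ?S" using S by (simp add: addsub_def)
  moreover have "vk 1 \<noteq> 0" unfolding vk_def using act_nz[OF A5_pow[OF sg_alt] v0(2)] .
  ultimately have "card ?S = 81" by (metis card_1_singletonE singletonD)
  then have "?S = UNIV" by (metis cardV card_subset_eq finite top_greatest)
  then show ?thesis by simp
qed

lemma Pm_invertible: "invertible Pm"
proof -
  have "\<forall>i. \<exists>b. Pm *v b = axis i 1" using Pm_surj by (metis surjD)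
  then obtain b where b: "\<And>i. Pm *v b i = axis i 1" by metis
  define B :: "3^4^4" where "B = (\<chi> r i. b i $ r)"
  have PB: "Pm ** B = mat 1"
  proof -
    have "(Pm ** B) $ r $ i = mat 1 $ r $ i" for r i
    proof -
      have "(\<chi> k. B $ k $ i) = b i" by (simp add: vec_eq_iff B_def)
      then have "(Pm ** B) $ r $ i = axis i 1 $ r" by (simp add: mm_col b)
      then show ?thesis by (simp add: axis_def mat_def eq_commute)
    qed
    then show ?thesis by (simp add: vec_eq_iff)
  qed
  have inj: "inj ((*v) Pm)" by (rule finite_UNIV_surj_inj[OF _ Pm_surj]) simp
  have "(B ** Pm) *v c = c" for c
  proof -
    have "Pm *v ((B ** Pm) *v c) = ((Pm ** B) ** Pm) *v c" by (simp add: matrix_vector_mul_assoc matrix_mul_assoc)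
    also have "\<dots> = Pm *v c" using PB by (simp add: matrix_vector_mul_assoc)
    finally show ?thesis using inj by (meson injD)
  qed
  then have BP: "B ** Pm = mat 1" by (simp add: matrix_eq)
  show ?thesis unfolding invertible_def using PB BP by blast
qed

end

lemma neg_mv: "(- A :: 'a::comm_ring_1^'n^'m) *v w = - (A *v w)"
  by (simp add: vec_eq_iff matrix_vector_mult_def sum_negf)

context rep begin

lemma z_neg:
  assumes zz: "z ** z = mat 1" and zn: "z \<noteq> mat 1" and zc: "z ** \<psi> sg = \<psi> sg ** z"
  shows "z = - mat 1"
proof -
  define F where "F = {w. z *v w = w}"
  have F: "addsub F" by (simp add: F_def addsub_def matrix_vector_right_distrib)
  have gF: "g ` F \<subseteq> F"
  proof
    fix y assume "y \<in> g ` F"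
    then obtain w where w: "z *v w = w" "y = g w" by (auto simp: F_def)
    have "z *v y = (z ** \<psi> sg) *v w" using w by (simp add: act_def matrix_vector_mul_assoc)
    also have "\<dots> = \<psi> sg *v (z *v w)" using zc by (simp add: matrix_vector_mul_assoc)
    also have "\<dots> = y" using w by (simp add: act_def)
    finally show "y \<in> F" by (simp add: F_def)
  qed
  have c: "card F = 1 \<or> card F = 81" using card_1_or_81[OF F gF act_additive g5 g_nofix] .
  have "card F \<noteq> 81"
  proof
    assume "card F = 81"
    then have "F = UNIV" by (rule card81_UNIV)
    then have "z = mat 1" by (simp add: matrix_eq F_def set_eq_iff)
    then show False using zn by simp
  qed
  then have c1: "card F = 1" using c by simp
  have F0: "F = {0}"
  proof -
    obtain x where x: "F = {x}" using card_1_singletonE[OF c1] by blast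
    moreover have "0 \<in> F" by (simp add: F_def)
    ultimately show ?thesis by simp
  qed
  have zw: "z *v w = - w" for w
  proof -
    have "z *v (w + z *v w) = z *v w + (z ** z) *v w"
      by (simp add: matrix_vector_right_distrib matrix_vector_mul_assoc)
    also have "\<dots> = w + z *v w" using zz by simp
    finally have "w + z *v w \<in> F" by (simp add: F_def)
    then have "w + z *v w = 0" using F0 by blast
    then show ?thesis by (simp add: eq_neg_iff_add_eq_0 add.commute)
  qed
  have zw': "\<forall>w. z *v w = (- mat 1) *v w" using zw by (simp add: neg_mv)
  show ?thesis by (subst matrix_eq) (rule zw')
qed

end

lemma (in group) conj_trans:
  assumes a: "a \<in> carrier G" and b: "b \<in> carrier G" and S0: "S0 \<subseteq> carrier G"
    and H: "H = (\<lambda>h. a \<otimes> h \<otimes> inv a) ` S0" and K: "K = (\<lambda>h. b \<otimes> h \<otimes> inv b) ` S0"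
  shows "K = (b \<otimes> inv a) <# H #> inv (b \<otimes> inv a)"
proof -
  let ?c = "b \<otimes> inv a"
  have c: "?c \<in> carrier G" using a b by simp
  have eq: "?c \<otimes> (a \<otimes> h \<otimes> inv a) \<otimes> inv ?c = b \<otimes> h \<otimes> inv b" if h: "h \<in> carrier G" for h
  proof -
    have lc: "inv x \<otimes> (x \<otimes> y) = y" if "x \<in> carrier G" "y \<in> carrier G" for x y
      using that by (simp add: m_assoc[symmetric])
    show ?thesis using a b h by (simp add: m_assoc inv_mult_group lc)
  qed
  have "?c <# H #> inv ?c = (\<lambda>h. ?c \<otimes> h \<otimes> inv ?c) ` H"
    unfolding l_coset_def r_coset_def by auto
  also have "\<dots> = (\<lambda>h. ?c \<otimes> (a \<otimes> h \<otimes> inv a) \<otimes> inv ?c) ` S0" unfolding H by (simp add: image_image)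
  also have "\<dots> = K" unfolding K using eq S0 by (intro image_cong) auto
  finally show ?thesis by simp
qed

lemma conj_form:
  assumes H: "H \<in> subgroups_iso GL4F3 A5xC2"
  shows "\<exists>P\<in>carrier GL4F3. H = (\<lambda>h. P \<otimes>\<^bsub>GL4F3\<^esub> h \<otimes>\<^bsub>GL4F3\<^esub> inv\<^bsub>GL4F3\<^esub> P) ` H0"
proof -
  have sg: "subgroup H GL4F3" and iso: "GL4F3\<lparr>carrier := H\<rparr> \<cong> A5xC2"
    using H by (simp_all add: subgroups_iso_def)
  have grpH: "group (GL4F3\<lparr>carrier := H\<rparr>)" using group.subgroup_imp_group[OF GL_group sg] .
  obtain \<phi> where \<phi>: "\<phi> \<in> iso (GL4F3\<lparr>carrier := H\<rparr>) A5xC2" using iso unfolding is_iso_def by blast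
  define \<psi>' where "\<psi>' = inv_into H \<phi>"
  have \<psi>'iso: "\<psi>' \<in> iso A5xC2 (GL4F3\<lparr>carrier := H\<rparr>)"
    using group.iso_set_sym[OF grpH \<phi>] unfolding \<psi>'_def by simp
  have HGL: "H \<subseteq> carrier GL4F3" using sg by (rule subgroup.subset)
  have \<psi>'hom: "\<psi>' \<in> hom A5xC2 GL4F3" using \<psi>'iso HGL unfolding iso_def hom_def by auto
  have \<psi>'img: "\<psi>' ` carrier A5xC2 = H" and \<psi>'inj: "inj_on \<psi>' (carrier A5xC2)"
    using \<psi>'iso unfolding iso_def bij_betw_def by simp_all
  have \<psi>'mult: "\<psi>' (x \<otimes>\<^bsub>A5xC2\<^esub> y) = \<psi>' x ** \<psi>' y" if "x \<in> carrier A5xC2" "y \<in> carrier A5xC2" for x y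
    using hom_mult[OF \<psi>'hom that] by simp
  have gh: "group_hom A5xC2 GL4F3 \<psi>'"
    unfolding group_hom_def group_hom_axioms_def using A5xC2_group GL_group \<psi>'hom by blast
  have one: "\<one>\<^bsub>A5xC2\<^esub> = (id, 0)" by (simp add: A5xC2_def alt_group_one)
  have \<psi>'one: "\<psi>' (id, 0) = mat 1" using group_hom.hom_one[OF gh] one by simp
  have inC: "(p, c) \<in> carrier A5xC2" if "p \<in> carrier (alt_group 5)" "c = 0 \<or> c = 1" for p c
    using that by (auto simp: A5xC2_carrier)
  define \<psi> where "\<psi> p = \<psi>' (p, 0)" for p
  have rep: "rep \<psi>"
  proof
    show "\<psi> \<in> hom (alt_group 5) GL4F3"
    proof (rule homI)
      fix p assume "p \<in> carrier (alt_group 5)"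
      then have "(p, 0) \<in> carrier A5xC2" using inC by blast
      then show "\<psi> p \<in> carrier GL4F3" unfolding \<psi>_def using \<psi>'hom by (auto simp: hom_def)
    next
      fix p q assume p: "p \<in> carrier (alt_group 5)" and q: "q \<in> carrier (alt_group 5)"
      have "\<psi> (p \<otimes>\<^bsub>alt_group 5\<^esub> q) = \<psi>' ((p, 0) \<otimes>\<^bsub>A5xC2\<^esub> (q, 0))"
        unfolding \<psi>_def by (simp add: A5xC2_mult alt_group_mult)
      also have "\<dots> = \<psi> p ** \<psi> q" unfolding \<psi>_def using \<psi>'mult inC p q by blast
      finally show "\<psi> (p \<otimes>\<^bsub>alt_group 5\<^esub> q) = \<psi> p \<otimes>\<^bsub>GL4F3\<^esub> \<psi> q" by simp
    qed
    show "inj_on \<psi> (carrier (alt_group 5))"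
    proof (rule inj_onI)
      fix p q assume p: "p \<in> carrier (alt_group 5)" and q: "q \<in> carrier (alt_group 5)" and e: "\<psi> p = \<psi> q"
      have "(p, 0::int) = (q, 0)" using inj_onD[OF \<psi>'inj] e inC p q unfolding \<psi>_def by blast
      then show "p = q" by simp
    qed
  qed
  interpret R: rep \<psi> by (rule rep)
  define z where "z = \<psi>' (id, 1)"
  have idc: "(id, 1) \<in> carrier A5xC2" using inC A5_id by blast
  have sgc: "(sg, 0) \<in> carrier A5xC2" using inC sg_alt by blast
  have zz: "z ** z = mat 1"
  proof -
    have "(id, 1) \<otimes>\<^bsub>A5xC2\<^esub> (id, 1) = (id, (0::int))" by (simp only: A5xC2_mult comp_id) simp
    then show ?thesis unfolding z_def using \<psi>'mult[OF idc idc] \<psi>'one by simp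
  qed
  have zn: "z \<noteq> mat 1"
  proof
    assume "z = mat 1"
    then have "\<psi>' (id, 1) = \<psi>' (id, 0)" using \<psi>'one z_def by simp
    then have "(id, 1::int) = (id, 0)" using inj_onD[OF \<psi>'inj] idc inC[OF A5_id] by blast
    then show False by simp
  qed
  have zc: "z ** \<psi> sg = \<psi> sg ** z"
  proof -
    have "(id, 1) \<otimes>\<^bsub>A5xC2\<^esub> (sg, 0) = (sg, (1::int))" by (simp only: A5xC2_mult id_comp) simp
    moreover have "(sg, 0) \<otimes>\<^bsub>A5xC2\<^esub> (id, 1) = (sg, (1::int))" by (simp only: A5xC2_mult comp_id) simp
    ultimately show ?thesis unfolding z_def \<psi>_def using \<psi>'mult[OF idc sgc] \<psi>'mult[OF sgc idc] by simp
  qed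
  have zneg: "z = - mat 1" using R.z_neg[OF zz zn zc] .
  define P where "P = R.Pm"
  obtain B where PB: "P ** B = mat 1" and BP: "B ** P = mat 1"
    using R.Pm_invertible unfolding P_def invertible_def by blast
  have Pc: "P \<in> carrier GL4F3" using R.Pm_invertible by (simp add: P_def GL_carrier)
  have Bc: "B \<in> carrier GL4F3" using PB BP by (auto simp: GL_carrier invertible_def)
  have invP: "inv\<^bsub>GL4F3\<^esub> P = B" using group.inv_equality[OF GL_group, of B P] BP Pc Bc by simp
  have psi_conj: "\<psi> p = P ** rho0 p ** B" if p: "p \<in> carrier (alt_group 5)" for p
  proof -
    have "\<psi> p = \<psi> p ** (P ** B)" using PB by simp
    also have "\<dots> = (\<psi> p ** P) ** B" by (simp add: matrix_mul_assoc)
    also have "\<dots> = P ** rho0 p ** B" using R.intertwine[OF p] P_def by simp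
    finally show ?thesis .
  qed
  have psi'_conj: "\<psi>' x = P ** rhoC x ** B" if x: "x \<in> carrier A5xC2" for x
  proof -
    obtain p c where pc: "x = (p, c)" by force
    have p: "p \<in> carrier (alt_group 5)" and c: "c = 0 \<or> c = 1" using x pc by (auto simp: A5xC2_carrier)
    have "(p, 0) \<otimes>\<^bsub>A5xC2\<^esub> (id, c) = (p, c)"
      using c by (simp only: A5xC2_mult comp_id) auto
    then have "\<psi>' x = \<psi> p ** \<psi>' (id, c)" unfolding pc \<psi>_def using \<psi>'mult inC p c A5_id by metis
    also have "\<dots> = P ** rhoC x ** B"
      using c
    proof
      assume "c = 0" then show ?thesis using psi_conj[OF p] \<psi>'one by (simp add: pc rhoC_def)
    next
      assume "c = 1"
      then have "\<psi>' (id, c) = - mat 1" using zneg z_def by simp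
      then show ?thesis using psi_conj[OF p] \<open>c = 1\<close>
        by (simp add: pc rhoC_def mm_neg neg_mm)
    qed
    finally show ?thesis .
  qed
  have "H = (\<lambda>x. P ** rhoC x ** B) ` carrier A5xC2"
    using \<psi>'img psi'_conj by (metis (no_types, lifting) image_cong)
  also have "\<dots> = (\<lambda>h. P ** h ** B) ` H0" by (simp add: H0_def image_image)
  finally have "H = (\<lambda>h. P \<otimes>\<^bsub>GL4F3\<^esub> h \<otimes>\<^bsub>GL4F3\<^esub> inv\<^bsub>GL4F3\<^esub> P) ` H0" using invP by simp
  then show ?thesis using Pc by blast
qed

theorem lemma3p14:
  shows "subgroups_iso GL4F3 A5xC2 \<noteq> {} \<and>
         (\<forall>H\<in>subgroups_iso GL4F3 A5xC2. \<forall>K\<in>subgroups_iso GL4F3 A5xC2.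
             conjugate_subgroups GL4F3 H K)"
proof
  show "subgroups_iso GL4F3 A5xC2 \<noteq> {}" using H0_in by blast
next
  show "\<forall>H\<in>subgroups_iso GL4F3 A5xC2. \<forall>K\<in>subgroups_iso GL4F3 A5xC2. conjugate_subgroups GL4F3 H K"
  proof (intro ballI)
    fix H K assume H: "H \<in> subgroups_iso GL4F3 A5xC2" and K: "K \<in> subgroups_iso GL4F3 A5xC2"
    obtain a where a: "a \<in> carrier GL4F3"
      and Ha: "H = (\<lambda>h. a \<otimes>\<^bsub>GL4F3\<^esub> h \<otimes>\<^bsub>GL4F3\<^esub> inv\<^bsub>GL4F3\<^esub> a) ` H0"
      using conj_form[OF H] by blast
    obtain b where b: "b \<in> carrier GL4F3"
      and Kb: "K = (\<lambda>h. b \<otimes>\<^bsub>GL4F3\<^esub> h \<otimes>\<^bsub>GL4F3\<^esub> inv\<^bsub>GL4F3\<^esub> b) ` H0"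
      using conj_form[OF K] by blast
    have H0c: "H0 \<subseteq> carrier GL4F3"
      using H0_in by (auto simp: subgroups_iso_def dest: subgroup.subset)
    have K': "K = (b \<otimes>\<^bsub>GL4F3\<^esub> inv\<^bsub>GL4F3\<^esub> a) <#\<^bsub>GL4F3\<^esub> H #>\<^bsub>GL4F3\<^esub> inv\<^bsub>GL4F3\<^esub> (b \<otimes>\<^bsub>GL4F3\<^esub> inv\<^bsub>GL4F3\<^esub> a)"
      using group.conj_trans[OF GL_group a b H0c Ha Kb] .
    have "b \<otimes>\<^bsub>GL4F3\<^esub> inv\<^bsub>GL4F3\<^esub> a \<in> carrier GL4F3"
      by (rule monoid.m_closed[OF group.is_monoid[OF GL_group] b group.inv_closed[OF GL_group a]])
    then show "conjugate_subgroups GL4F3 H K" unfolding conjugate_subgroups_def using K' by blast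
  qed
qed

end
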